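(* For every instance, $$\mathrm{opt}_D\text{-}\mathrm{EEP}=\mathrm{opt}\text{-}\mathrm{SUM},\qquad \mathrm{opt}_D\text{-}\mathrm{EMP}\ \ge\ 2\,\mathrm{opt}\text{-}\mathrm{SUM}-1,\qquad \mathrm{opt}_D\text{-}\mathrm{WMP}\ \ge\ 2\,\mathrm{opt}\text{-}\mathrm{MAX}-1.$$
   Context: An instance consists of a finite set $E$ of $n$ elements with nonnegative weights $(p_e)_{e\in E}$, and $m$ tests; test $i\in[m]$ is a subset $s_i\subseteq E$. For SUM objectives (EMP, EEP) weights satisfy $\sum_e p_e=1$; for MAX objectives (WMP, WEP) they satisfy $\max_e p_e=1$. A schedule is an infinite sequence $\sigma_1,\sigma_2,\dots\in[m]$ of tests; deterministic schedules are fixed sequences, stochastic schedules generate the sequence randomly with the distribution of $\sigma_t$ possibly depending on $\sigma_1,\dots,\sigma_{t-1}$. Detection time $T(e,t)=\mathbb{E}\big[1+\min\{h\ge 0: e\in s_{\sigma_{t+h}}\}\big]$, $M_t[e]=\sup_{t\ge1}T(e,t)$, $E_t[e]=\lim_{H\to\infty}\frac1H\sum_{t=1}^H T(e,t)$. A schedule is valid if for every $e$, $M_t[e]$ is finite and $E_t[e]$ exists, and for every test $i$ the limit $\lim_H\frac1H\sum_{t\le H}\Pr[\sigma_t=i]$ exists. $\mathrm{EMP}=\sum_e p_eM_t[e]$, $\mathrm{EEP}=\sum_e p_eE_t[e]$, $\mathrm{WMP}=\sup_{e,t}p_eT(e,t)$, $\mathrm{WEP}=\max_e p_eE_t[e]$.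 $\mathrm{opt}_D\text{-}X$ is the infimum of $X$ over valid deterministic schedules; $\mathrm{opt}\text{-}\mathrm{SUM}$ is the infimum of EEP and $\mathrm{opt}\text{-}\mathrm{MAX}$ the infimum of WEP over valid stochastic schedules. *)

theory Defs
  imports "HOL-Probability.Probability"
begin

text \<open>Schedules are sequences indexed from 0 (paper index t corresponds to t-1 here).
  Tests are indexed by 0..<m; a test index i has test set s i.\<close>

definition detect :: "(nat \<Rightarrow> 'e set) \<Rightarrow> 'e \<Rightarrow> (nat \<Rightarrow> nat) \<Rightarrow> nat \<Rightarrow> ennreal" where
  "detect s e \<sigma> t =
     (if \<exists>h. e \<in> s (\<sigma> (t + h)) then of_nat (Suc (LEAST h. e \<in> s (\<sigma> (t + h)))) else \<infinity>)"

text \<open>Generic quantities, given detection times D e t = T(e,t) and test frequencies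
  F i t = Pr[sigma_t = i].\<close>
definition Mt :: "('e \<Rightarrow> nat \<Rightarrow> ennreal) \<Rightarrow> 'e \<Rightarrow> ennreal" where
  "Mt D e = (SUP t. D e t)"

definition Et :: "('e \<Rightarrow> nat \<Rightarrow> ennreal) \<Rightarrow> 'e \<Rightarrow> real" where
  "Et D e = lim (\<lambda>H. (\<Sum>t<H. enn2real (D e t)) / real H)"

definition valid_gen :: "'e set \<Rightarrow> nat \<Rightarrow> ('e \<Rightarrow> nat \<Rightarrow> ennreal) \<Rightarrow> (nat \<Rightarrow> nat \<Rightarrow> real) \<Rightarrow> bool" where
  "valid_gen E m D F \<longleftrightarrow>
     (\<forall>e\<in>E. Mt D e < \<infinity> \<and> convergent (\<lambda>H. (\<Sum>t<H. enn2real (D e t)) / real H)) \<and>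
     (\<forall>i<m. convergent (\<lambda>H. (\<Sum>t<H. F i t) / real H))"

definition EMP :: "'e set \<Rightarrow> ('e \<Rightarrow> real) \<Rightarrow> ('e \<Rightarrow> nat \<Rightarrow> ennreal) \<Rightarrow> real" where
  "EMP E p D = (\<Sum>e\<in>E. p e * enn2real (Mt D e))"

definition EEP :: "'e set \<Rightarrow> ('e \<Rightarrow> real) \<Rightarrow> ('e \<Rightarrow> nat \<Rightarrow> ennreal) \<Rightarrow> real" where
  "EEP E p D = (\<Sum>e\<in>E. p e * Et D e)"

definition WMP :: "'e set \<Rightarrow> ('e \<Rightarrow> real) \<Rightarrow> ('e \<Rightarrow> nat \<Rightarrow> ennreal) \<Rightarrow> real" where
  "WMP E p D = (SUP et \<in> E \<times> (UNIV :: nat set). p (fst et) * enn2real (D (fst et) (snd et)))"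

definition WEP :: "'e set \<Rightarrow> ('e \<Rightarrow> real) \<Rightarrow> ('e \<Rightarrow> nat \<Rightarrow> ennreal) \<Rightarrow> real" where
  "WEP E p D = Max ((\<lambda>e. p e * Et D e) ` E)"

definition det_D :: "(nat \<Rightarrow> 'e set) \<Rightarrow> (nat \<Rightarrow> nat) \<Rightarrow> 'e \<Rightarrow> nat \<Rightarrow> ennreal" where
  "det_D s \<sigma> = (\<lambda>e t. detect s e \<sigma> t)"

definition det_F :: "(nat \<Rightarrow> nat) \<Rightarrow> nat \<Rightarrow> nat \<Rightarrow> real" where
  "det_F \<sigma> = (\<lambda>i t. if \<sigma> t = i then 1 else 0)"

definition valid_det :: "'e set \<Rightarrow> nat \<Rightarrow> (nat \<Rightarrow> 'e set) \<Rightarrow> (nat \<Rightarrow> nat) \<Rightarrow> bool" where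
  "valid_det E m s \<sigma> \<longleftrightarrow> (\<forall>t. \<sigma> t < m) \<and> valid_gen E m (det_D s \<sigma>) (det_F \<sigma>)"

definition sched_space :: "nat \<Rightarrow> (nat \<Rightarrow> nat) measure" where
  "sched_space m = Pi\<^sub>M UNIV (\<lambda>_. count_space {..<m})"

definition sto_D :: "(nat \<Rightarrow> 'e set) \<Rightarrow> (nat \<Rightarrow> nat) measure \<Rightarrow> 'e \<Rightarrow> nat \<Rightarrow> ennreal" where
  "sto_D s M = (\<lambda>e t. \<integral>\<^sup>+ \<sigma>. detect s e \<sigma> t \<partial>M)"

definition sto_F :: "(nat \<Rightarrow> nat) measure \<Rightarrow> nat \<Rightarrow> nat \<Rightarrow> real" where
  "sto_F M = (\<lambda>i t. measure M {\<sigma> \<in> space M. \<sigma> t = i})"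

definition valid_sto :: "'e set \<Rightarrow> nat \<Rightarrow> (nat \<Rightarrow> 'e set) \<Rightarrow> (nat \<Rightarrow> nat) measure \<Rightarrow> bool" where
  "valid_sto E m s M \<longleftrightarrow> prob_space M \<and> sets M = sets (sched_space m) \<and>
     valid_gen E m (sto_D s M) (sto_F M)"

text \<open>Optima (infima, in the extended reals; the infimum of the empty set is \<infinity>).\<close>
definition optD :: "('e set \<Rightarrow> ('e \<Rightarrow> real) \<Rightarrow> ('e \<Rightarrow> nat \<Rightarrow> ennreal) \<Rightarrow> real)
     \<Rightarrow> 'e set \<Rightarrow> nat \<Rightarrow> (nat \<Rightarrow> 'e set) \<Rightarrow> ('e \<Rightarrow> real) \<Rightarrow> ereal" where
  "optD X E m s p = (INF \<sigma> \<in> {\<sigma>. valid_det E m s \<sigma>}. ereal (X E p (det_D s \<sigma>)))"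

definition opt_SUM :: "'e set \<Rightarrow> nat \<Rightarrow> (nat \<Rightarrow> 'e set) \<Rightarrow> ('e \<Rightarrow> real) \<Rightarrow> ereal" where
  "opt_SUM E m s p = (INF M \<in> {M. valid_sto E m s M}. ereal (EEP E p (sto_D s M)))"

definition opt_MAX :: "'e set \<Rightarrow> nat \<Rightarrow> (nat \<Rightarrow> 'e set) \<Rightarrow> ('e \<Rightarrow> real) \<Rightarrow> ereal" where
  "opt_MAX E m s p = (INF M \<in> {M. valid_sto E m s M}. ereal (WEP E p (sto_D s M)))"

end

theory Submission
  imports Defs
begin

lemma detect_le:
  assumes "e \<in> s (\<sigma> (t + h))"
  shows "detect s e \<sigma> t \<le> of_nat (Suc h)"
proof -
  have "(LEAST h. e \<in> s (\<sigma> (t + h))) \<le> h" using assms by (rule Least_le)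
  then show ?thesis using assms unfolding detect_def by auto
qed

lemma detect_ge:
  assumes "\<And>h. h < k \<Longrightarrow> e \<notin> s (\<sigma> (t + h))"
  shows "of_nat (Suc k) \<le> detect s e \<sigma> t"
proof (cases "\<exists>h. e \<in> s (\<sigma> (t + h))")
  case True
  then obtain h where h: "e \<in> s (\<sigma> (t + h))" by blast
  have "e \<in> s (\<sigma> (t + (LEAST h. e \<in> s (\<sigma> (t + h)))))" using h by (rule LeastI)
  then have "k \<le> (LEAST h. e \<in> s (\<sigma> (t + h)))" using assms not_le by blast
  then show ?thesis using True unfolding detect_def by auto
next
  case False
  then show ?thesis unfolding detect_def by auto
qed

lemma detect_cases: "detect s e \<sigma> t = \<infinity> \<or> (\<exists>n. detect s e \<sigma> t = of_nat n)"
  unfolding detect_def by (auto simp del: of_nat_Suc)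

lemma detect_hit: "e \<in> s (\<sigma> t) \<Longrightarrow> detect s e \<sigma> t = 1"
proof -
  assume a: "e \<in> s (\<sigma> t)"
  then have "(LEAST h. e \<in> s (\<sigma> (t + h))) = 0" by (intro Least_eq_0) simp
  then show ?thesis using a unfolding detect_def by (auto intro: exI[of _ 0])
qed

lemma detect_nohit: "e \<notin> s (\<sigma> t) \<Longrightarrow> detect s e \<sigma> t = detect s e \<sigma> (Suc t) + 1"
proof -
  assume a: "e \<notin> s (\<sigma> t)"
  show ?thesis
  proof (cases "\<exists>h. e \<in> s (\<sigma> (t + h))")
    case True
    then obtain h where h: "e \<in> s (\<sigma> (t + h))" by blast
    have L: "(LEAST h. e \<in> s (\<sigma> (t + h))) = Suc (LEAST h. e \<in> s (\<sigma> (t + Suc h)))"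
      by (rule Least_Suc[where P="\<lambda>h. e \<in> s (\<sigma> (t + h))", OF h]) (use a in simp)
    have ex2: "\<exists>h. e \<in> s (\<sigma> (Suc t + h))"
      using h a by (metis add.right_neutral add_Suc_shift not0_implies_Suc)
    show ?thesis unfolding detect_def using True ex2 L by (simp add: ac_simps)
  next
    case False
    then have "\<not> (\<exists>h. e \<in> s (\<sigma> (Suc t + h)))" by (metis add_Suc_shift)
    then show ?thesis using False unfolding detect_def by simp
  qed
qed

lemma sum_bound_ind:
  fixes d :: "nat \<Rightarrow> real"
  assumes b: "\<And>t. 0 \<le> d t \<and> d t \<le> G" and r: "\<And>t. d t = 1 \<or> d t = d (Suc t) + 1"
  shows "2 * (\<Sum>t<H. d t) \<le> real H + (d 0)\<^sup>2 - (d H)\<^sup>2 + G * (real H - d 0 + d H)"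
proof (induction H)
  case 0
  then show ?case by simp
next
  case (Suc H)
  have "2 * d H \<le> 1 + (d H)\<^sup>2 - (d (Suc H))\<^sup>2 + G * (1 + d (Suc H) - d H)"
  proof (cases "d H = 1")
    case True
    have "d (Suc H) * d (Suc H) \<le> G * d (Suc H)"
      using b[of "Suc H"] by (intro mult_right_mono) auto
    then show ?thesis using True by (simp add: power2_eq_square algebra_simps)
  next
    case False
    then have "d H = d (Suc H) + 1" using r[of H] by auto
    then show ?thesis by (simp add: power2_eq_square algebra_simps)
  qed
  then show ?case using Suc.IH by (simp add: algebra_simps)
qed

lemma sum_bound:
  fixes d :: "nat \<Rightarrow> real"
  assumes b: "\<And>t. 0 \<le> d t \<and> d t \<le> G" and r: "\<And>t. d t = 1 \<or> d t = d (Suc t) + 1"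
  shows "2 * (\<Sum>t<H. d t) \<le> real H * (G + 1) + 2 * G\<^sup>2"
proof -
  have 1: "2 * (\<Sum>t<H. d t) \<le> real H + (d 0)\<^sup>2 - (d H)\<^sup>2 + G * (real H - d 0 + d H)"
    by (rule sum_bound_ind[of d G, OF b r])
  have G0: "0 \<le> G" using b[of 0] by auto
  have "(d 0)\<^sup>2 \<le> G\<^sup>2" using b[of 0] by (intro power_mono) auto
  moreover have "G * (real H - d 0 + d H) \<le> G * (real H + G)"
    using b[of 0] b[of H] G0 by (intro mult_left_mono) auto
  moreover have "0 \<le> d H * d H" "0 \<le> G * d 0" using b[of 0] G0 by auto
  moreover have "G * (real H - d 0 + d H) = G * real H - G * d 0 + G * d H"
    "G * (real H + G) = G * real H + G * G" "real H * (G + 1) = G * real H + real H" by (simp_all add: algebra_simps)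
  moreover have "0 \<le> (d H)\<^sup>2" by simp
  ultimately show ?thesis using 1 unfolding power2_eq_square by linarith
qed

lemma Mt_fin_detect:
  assumes "Mt D e < \<infinity>"
  shows "D e t \<le> Mt D e" "D e t < \<infinity>"
proof -
  show "D e t \<le> Mt D e" unfolding Mt_def by (rule SUP_upper) auto
  then show "D e t < \<infinity>" using assms by auto
qed

lemma Et_bound:
  assumes fin: "\<And>t. detect s e \<sigma> t < \<infinity>"
    and G: "\<And>t. enn2real (detect s e \<sigma> t) \<le> G"
    and conv: "convergent (\<lambda>H. (\<Sum>t<H. enn2real (det_D s \<sigma> e t)) / real H)"
  shows "Et (det_D s \<sigma>) e \<le> (G + 1) / 2"
proof -
  define d where "d t = enn2real (detect s e \<sigma> t)" for t
  have b: "0 \<le> d t \<and> d t \<le> G" for t using G[of t] by (simp add: d_def)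
  have r: "d t = 1 \<or> d t = d (Suc t) + 1" for t
  proof (cases "e \<in> s (\<sigma> t)")
    case True then show ?thesis by (simp add: d_def detect_hit)
  next
    case False
    then have "detect s e \<sigma> t = detect s e \<sigma> (Suc t) + 1" by (rule detect_nohit)
    then have "d t = d (Suc t) + 1" using fin[of "Suc t"] unfolding d_def
      by (simp add: enn2real_plus)
    then show ?thesis by simp
  qed
  have lim: "(\<lambda>H. (\<Sum>t<H. d t) / real H) \<longlonglongrightarrow> Et (det_D s \<sigma>) e"
    using conv unfolding Et_def det_D_def d_def by (simp add: convergent_LIMSEQ_iff)
  have lim2: "(\<lambda>H. (G + 1) / 2 + G\<^sup>2 * (1 / real H)) \<longlonglongrightarrow> (G + 1) / 2 + G\<^sup>2 * 0"
    by (intro tendsto_intros lim_inverse_n')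
  have ev: "\<forall>\<^sub>F H in sequentially. (\<Sum>t<H. d t) / real H \<le> (G + 1) / 2 + G\<^sup>2 * (1 / real H)"
  proof (rule eventually_sequentiallyI[of 1])
    fix H :: nat assume "1 \<le> H"
    then have Hp: "0 < real H" by simp
    have "2 * (\<Sum>t<H. d t) \<le> real H * (G + 1) + 2 * G\<^sup>2" by (rule sum_bound[of d G, OF b r])
    then show "(\<Sum>t<H. d t) / real H \<le> (G + 1) / 2 + G\<^sup>2 * (1 / real H)"
      using Hp by (simp add: field_simps)
  qed
  show ?thesis using tendsto_le[OF trivial_limit_sequentially lim2 lim ev] by simp
qed

lemma space_sched: "space (sched_space m) = {\<sigma>. \<forall>t. \<sigma> t < m}"
  unfolding sched_space_def space_PiM PiE_def Pi_def by auto

lemma comp_measurable: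
  assumes "f \<in> {..<m} \<rightarrow> space N"
  shows "(\<lambda>\<sigma>. f (\<sigma> j)) \<in> measurable (sched_space m) N"
proof -
  have a: "(\<lambda>\<sigma>. \<sigma> j) \<in> measurable (sched_space m) (count_space {..<m})"
    unfolding sched_space_def by (rule measurable_component_singleton) simp
  have b: "f \<in> measurable (count_space {..<m}) N"
    using assms by (simp add: measurable_count_space_eq1)
  show ?thesis using measurable_comp[OF a b] by (simp add: comp_def)
qed

lemma detect_INF:
  "detect s e \<sigma> t = (INF h. if e \<in> s (\<sigma> (t + h)) then of_nat (Suc h) else \<infinity>)"
proof (rule antisym)
  show "detect s e \<sigma> t \<le> (INF h. if e \<in> s (\<sigma> (t + h)) then of_nat (Suc h) else \<infinity>)"
  proof (rule INF_greatest)
    fix h show "detect s e \<sigma> t \<le> (if e \<in> s (\<sigma> (t + h)) then of_nat (Suc h) else \<infinity>)"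
      using detect_le[of e s \<sigma> t h] by auto
  qed
next
  show "(INF h. if e \<in> s (\<sigma> (t + h)) then of_nat (Suc h) else \<infinity>) \<le> detect s e \<sigma> t"
  proof (cases "\<exists>h. e \<in> s (\<sigma> (t + h))")
    case True
    define L where "L = (LEAST h. e \<in> s (\<sigma> (t + h)))"
    have "e \<in> s (\<sigma> (t + L))" unfolding L_def using True by (metis LeastI)
    then have "(INF h. if e \<in> s (\<sigma> (t + h)) then of_nat (Suc h) else \<infinity>) \<le> (of_nat (Suc L) :: ennreal)"
      by (intro INF_lower2[of L]) auto
    then show ?thesis using True unfolding detect_def L_def by simp
  next
    case False
    then show ?thesis unfolding detect_def by (simp add: INF_constant)
  qed
qed

lemma detect_measurable: "(\<lambda>\<sigma>. detect s e \<sigma> t) \<in> borel_measurable (sched_space m)"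
proof -
  have "(\<lambda>\<sigma>. (INF h. if e \<in> s (\<sigma> (t + h)) then of_nat (Suc h) else \<infinity>) :: ennreal)
        \<in> borel_measurable (sched_space m)"
  proof (rule borel_measurable_INF)
    fix h :: nat
    show "(\<lambda>\<sigma>. if e \<in> s (\<sigma> (t + h)) then of_nat (Suc h) else \<infinity> :: ennreal) \<in> borel_measurable (sched_space m)"
      by (rule comp_measurable[where f="\<lambda>i. if e \<in> s i then of_nat (Suc h) else \<infinity>"]) simp
  qed simp
  then show ?thesis by (simp add: detect_INF[abs_def])
qed

lemma dirac_D:
  assumes "\<sigma> \<in> space (sched_space m)"
  shows "sto_D s (return (sched_space m) \<sigma>) = det_D s \<sigma>"
  unfolding sto_D_def det_D_def
  by (intro ext nn_integral_return assms detect_measurable)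

lemma pred_sets: "{\<sigma> \<in> space (sched_space m). \<sigma> t = i} \<in> sets (sched_space m)"
proof -
  have "(\<lambda>\<sigma>. \<sigma> t = i) \<in> measurable (sched_space m) (count_space UNIV)"
    by (rule comp_measurable[where f="\<lambda>x. x = i"]) simp
  then show ?thesis by (simp add: pred_def[symmetric])
qed

lemma dirac_F:
  assumes "\<sigma> \<in> space (sched_space m)"
  shows "sto_F (return (sched_space m) \<sigma>) = det_F \<sigma>"
  unfolding sto_F_def det_F_def using assms
  by (intro ext) (simp add: measure_return pred_sets indicator_def)

lemma valid_dirac:
  assumes "valid_det E m s \<sigma>"
  shows "valid_sto E m s (return (sched_space m) \<sigma>)"
    "sto_D s (return (sched_space m) \<sigma>) = det_D s \<sigma>"
proof -
  have sp: "\<sigma> \<in> space (sched_space m)" using assms unfolding valid_det_def space_sched by auto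
  show "sto_D s (return (sched_space m) \<sigma>) = det_D s \<sigma>" using sp by (rule dirac_D)
  then show "valid_sto E m s (return (sched_space m) \<sigma>)"
    using assms sp unfolding valid_sto_def valid_det_def
    by (simp add: prob_space_return dirac_F)
qed

lemma det_Et_bound:
  assumes v: "valid_det E m s \<sigma>" and e: "e \<in> E"
    and G: "\<And>t. enn2real (detect s e \<sigma> t) \<le> G"
  shows "Et (det_D s \<sigma>) e \<le> (G + 1) / 2"
proof -
  have Mt: "Mt (det_D s \<sigma>) e < \<infinity>" and conv: "convergent (\<lambda>H. (\<Sum>t<H. enn2real (det_D s \<sigma> e t)) / real H)"
    using v e unfolding valid_det_def valid_gen_def by auto
  have fin: "detect s e \<sigma> t < \<infinity>" for t using Mt_fin_detect(2)[OF Mt, of t] by (simp add: det_D_def)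
  show ?thesis by (rule Et_bound[OF fin G conv])
qed

lemma det_Et_Mt:
  assumes v: "valid_det E m s \<sigma>" and e: "e \<in> E"
  shows "Et (det_D s \<sigma>) e \<le> (enn2real (Mt (det_D s \<sigma>) e) + 1) / 2"
proof -
  have Mt: "Mt (det_D s \<sigma>) e < \<infinity>"
    using v e unfolding valid_det_def valid_gen_def by auto
  show ?thesis
  proof (rule det_Et_bound[OF v e])
    fix t
    show "enn2real (detect s e \<sigma> t) \<le> enn2real (Mt (det_D s \<sigma>) e)"
      using Mt_fin_detect(1)[OF Mt, of t] Mt by (intro enn2real_mono) (auto simp: det_D_def)
  qed
qed

lemma det_EEP_EMP:
  assumes v: "valid_det E m s \<sigma>" and p: "\<forall>e\<in>E. p e \<ge> 0" and s1: "(\<Sum>e\<in>E. p e) = 1"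
  shows "2 * EEP E p (det_D s \<sigma>) \<le> EMP E p (det_D s \<sigma>) + 1"
proof -
  have "2 * EEP E p (det_D s \<sigma>) = (\<Sum>e\<in>E. 2 * (p e * Et (det_D s \<sigma>) e))"
    unfolding EEP_def by (simp add: sum_distrib_left)
  also have "\<dots> \<le> (\<Sum>e\<in>E. p e * enn2real (Mt (det_D s \<sigma>) e) + p e)"
  proof (rule sum_mono)
    fix e assume e: "e \<in> E"
    have "p e * Et (det_D s \<sigma>) e \<le> p e * ((enn2real (Mt (det_D s \<sigma>) e) + 1) / 2)"
      using p e det_Et_Mt[OF v e] by (intro mult_left_mono) auto
    then show "2 * (p e * Et (det_D s \<sigma>) e) \<le> p e * enn2real (Mt (det_D s \<sigma>) e) + p e"
      by (simp add: field_simps)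
  qed
  also have "\<dots> = EMP E p (det_D s \<sigma>) + 1" unfolding EMP_def using s1 by (simp add: sum.distrib)
  finally show ?thesis .
qed

lemma det_WEP_WMP:
  assumes fE: "finite E" and ne: "E \<noteq> {}" and v: "valid_det E m s \<sigma>"
    and p: "\<forall>e\<in>E. p e \<ge> 0" and mx: "Max (p ` E) = 1"
  shows "2 * WEP E p (det_D s \<sigma>) \<le> WMP E p (det_D s \<sigma>) + 1"
proof -
  let ?D = "det_D s \<sigma>"
  have Mt: "\<And>e. e \<in> E \<Longrightarrow> Mt ?D e < \<infinity>" using v unfolding valid_det_def valid_gen_def by auto
  have bd: "p e * enn2real (?D e t) \<le> (\<Sum>e\<in>E. p e * enn2real (Mt ?D e))" if e: "e \<in> E" for e t
  proof -
    have "p e * enn2real (?D e t) \<le> p e * enn2real (Mt ?D e)"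
      using p e Mt_fin_detect(1)[OF Mt[OF e], of t] Mt[OF e] by (intro mult_left_mono enn2real_mono) auto
    also have "\<dots> \<le> (\<Sum>e\<in>E. p e * enn2real (Mt ?D e))"
      using p e fE by (intro member_le_sum) auto
    finally show ?thesis .
  qed
  have bdd: "bdd_above ((\<lambda>et. p (fst et) * enn2real (?D (fst et) (snd et))) ` (E \<times> (UNIV :: nat set)))"
    using bd by (intro bdd_aboveI[where M="\<Sum>e\<in>E. p e * enn2real (Mt ?D e)"]) auto
  have upper: "p e * enn2real (?D e t) \<le> WMP E p ?D" if "e \<in> E" for e t
    unfolding WMP_def using cSUP_upper[OF _ bdd, of "(e, t)"] that by auto
  have W0: "0 \<le> WMP E p ?D"
  proof -
    obtain e where e: "e \<in> E" using ne by blast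
    have "0 \<le> p e * enn2real (?D e 0)" using p e by auto
    then show ?thesis using upper[OF e, of 0] by linarith
  qed
  have each: "2 * (p e * Et ?D e) \<le> WMP E p ?D + 1" if e: "e \<in> E" for e
  proof (cases "p e = 0")
    case True then show ?thesis using W0 by simp
  next
    case False
    then have pe: "0 < p e" using p e by force
    have pe1: "p e \<le> 1" using mx fE e by (metis Max_ge finite_imageI image_eqI)
    have "Et ?D e \<le> (WMP E p ?D / p e + 1) / 2"
    proof (rule det_Et_bound[OF v e])
      fix t show "enn2real (detect s e \<sigma> t) \<le> WMP E p ?D / p e"
        using upper[OF e, of t] pe by (simp add: field_simps det_D_def mult.commute)
    qed
    then have "p e * Et ?D e \<le> p e * ((WMP E p ?D / p e + 1) / 2)" using pe by (intro mult_left_mono) auto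
    also have "\<dots> = (WMP E p ?D + p e) / 2" using pe by (simp add: field_simps)
    finally show ?thesis using pe1 by simp
  qed
  have "WEP E p ?D \<in> (\<lambda>e. p e * Et ?D e) ` E" unfolding WEP_def using fE ne by (intro Max_in) auto
  then show ?thesis using each by auto
qed

lemma periodic_avg:
  fixes f :: "nat \<Rightarrow> real"
  assumes P: "0 < P" and per: "\<And>t. f (t + P) = f t"
  shows "(\<lambda>H. (\<Sum>t<H. f t) / real H) \<longlonglongrightarrow> (\<Sum>t<P. f t) / real P"
proof -
  define S where "S = (\<Sum>t<P. f t)"
  have shift: "(\<Sum>t<H + P. f t) = (\<Sum>t<H. f t) + S" for H
  proof (induction H)
    case 0 then show ?case by (simp add: S_def)
  next
    case (Suc H)
    have "(\<Sum>t<Suc H + P. f t) = (\<Sum>t<H + P. f t) + f (H + P)" by simp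
    then show ?case using Suc.IH per[of H] by simp
  qed
  define g where "g H = (\<Sum>t<H. f t) - real H * S / real P" for H
  have gP: "g (H + P) = g H" for H
    unfolding g_def using shift[of H] P by (simp add: field_simps)
  have gk: "g (x + k * P) = g x" for x k
  proof (induction k)
    case 0 then show ?case by simp
  next
    case (Suc k)
    have "x + Suc k * P = (x + k * P) + P" by simp
    then show ?case using gP Suc.IH by metis
  qed
  define Bd where "Bd = Max ((\<lambda>x. \<bar>g x\<bar>) ` {..<P})"
  have gB: "\<bar>g H\<bar> \<le> Bd" for H
  proof -
    have "g H = g (H mod P + (H div P) * P)" by simp
    also have "\<dots> = g (H mod P)" by (rule gk)
    finally have "\<bar>g H\<bar> = \<bar>g (H mod P)\<bar>" by simp
    also have "\<dots> \<le> Bd" unfolding Bd_def using P by (intro Max_ge) auto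
    finally show ?thesis .
  qed
  have g0: "(\<lambda>H. g H / real H) \<longlonglongrightarrow> 0"
  proof (rule tendsto_0_le[OF lim_inverse_n', where K=Bd])
    show "\<forall>\<^sub>F H in sequentially. norm (g H / real H) \<le> norm (1 / real H) * Bd"
      using gB by (intro always_eventually allI) (simp add: divide_simps abs_divide)
  qed
  have "(\<lambda>H. S / real P + g H / real H) \<longlonglongrightarrow> S / real P + 0"
    by (intro tendsto_intros g0)
  moreover have "\<forall>\<^sub>F H in sequentially. S / real P + g H / real H = (\<Sum>t<H. f t) / real H"
  proof (rule eventually_sequentiallyI[of 1])
    fix H :: nat assume "1 \<le> H"
    then show "S / real P + g H / real H = (\<Sum>t<H. f t) / real H"
      unfolding g_def using P by (simp add: field_simps)
  qed
  ultimately show ?thesis unfolding S_def by (simp add: tendsto_cong)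
qed

definition per :: "nat \<Rightarrow> nat \<Rightarrow> (nat \<Rightarrow> nat) \<Rightarrow> nat \<Rightarrow> nat" where
  "per H m \<sigma> t = (if t mod (H + m) < H then \<sigma> (t mod (H + m)) else t mod (H + m) - H)"

lemma per_k: "per H m \<sigma> (x + k * (H + m)) = per H m \<sigma> x"
  unfolding per_def by simp

lemma per_P: "per H m \<sigma> (x + (H + m)) = per H m \<sigma> x"
  using per_k[of H m \<sigma> x 1] by simp

lemma per_low: "t < H \<Longrightarrow> per H m \<sigma> t = \<sigma> t"
  unfolding per_def by simp

lemma per_block: "i < m \<Longrightarrow> per H m \<sigma> (H + i) = i"
  unfolding per_def by simp

lemma per_range: "(\<And>t. \<sigma> t < m) \<Longrightarrow> 0 < m \<Longrightarrow> per H m \<sigma> t < m"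
  unfolding per_def
  by (auto simp: not_less) (metis add.commute add_less_imp_less_right le_add_diff_inverse2 mod_less_divisor zero_less_iff_neq_zero add_gr_0)

lemma detect_per_periodic: "detect s e (per H m \<sigma>) (t + (H + m)) = detect s e (per H m \<sigma>) t"
proof -
  have "per H m \<sigma> (t + (H + m) + h) = per H m \<sigma> (t + h)" for h
    using per_P[of H m \<sigma> "t + h"] by (simp add: ac_simps)
  then show ?thesis unfolding detect_def by simp
qed

lemma detect_per_le_P:
  assumes i: "i < m" "e \<in> s i"
  shows "detect s e (per H m \<sigma>) t \<le> of_nat (H + m)"
proof -
  define P where "P = H + m"
  have P0: "0 < P" using i unfolding P_def by simp
  define r where "r = t mod P"
  define q where "q = t div P"
  have t: "t = r + q * P" unfolding r_def q_def by simp
  have rP: "r < P" unfolding r_def using P0 by simp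
  have hit: "e \<in> s (per H m \<sigma> (H + i + k * P))" for k
    using per_k[of H m \<sigma> "H + i" k] per_block[OF i(1), of H \<sigma>] i unfolding P_def by simp
  show ?thesis
  proof (cases "r \<le> H + i")
    case True
    have eq: "t + (H + i - r) = H + i + q * P" using t True by simp
    have "e \<in> s (per H m \<sigma> (t + (H + i - r)))" unfolding eq by (rule hit)
    then have "detect s e (per H m \<sigma>) t \<le> of_nat (Suc (H + i - r))"
      by (rule detect_le)
    also have "\<dots> \<le> of_nat (H + m)" using i True by (simp only: of_nat_le_iff)
    finally show ?thesis .
  next
    case False
    have eq: "t + (P - r + H + i) = H + i + Suc q * P" using t rP by simp
    have "e \<in> s (per H m \<sigma> (t + (P - r + H + i)))" unfolding eq by (rule hit)
    then have "detect s e (per H m \<sigma>) t \<le> of_nat (Suc (P - r + H + i))"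
      by (rule detect_le)
    also have "\<dots> \<le> of_nat (H + m)" using i False rP unfolding P_def by (simp only: of_nat_le_iff)
    finally show ?thesis .
  qed
qed

lemma detect_least:
  assumes "e \<in> s (\<sigma> (t + h))"
  shows "detect s e \<sigma> t = of_nat (Suc (LEAST h. e \<in> s (\<sigma> (t + h))))"
    "e \<in> s (\<sigma> (t + (LEAST h. e \<in> s (\<sigma> (t + h)))))"
    "(LEAST h. e \<in> s (\<sigma> (t + h))) \<le> h"
  using assms unfolding detect_def by (auto intro: LeastI Least_le simp del: of_nat_Suc)

lemma per_low_bound:
  assumes i: "i < m" "e \<in> s i" and tH: "t < H"
  shows "of_nat K * detect s e (per H m \<sigma>) t
     \<le> of_nat (Suc K) * detect s e \<sigma> t + of_nat (if H < t + m * K then K * m else 0)"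
proof (cases "\<exists>h<H - t. e \<in> s (\<sigma> (t + h))")
  case True
  then obtain h where h: "h < H - t" "e \<in> s (\<sigma> (t + h))" by blast
  define L where "L = (LEAST h. e \<in> s (\<sigma> (t + h)))"
  have dL: "detect s e \<sigma> t = of_nat (Suc L)" and hL: "e \<in> s (\<sigma> (t + L))" and Lh: "L \<le> h"
    using detect_least[of e s \<sigma>, OF h(2)] unfolding L_def by auto
  have "e \<in> s (per H m \<sigma> (t + L))" using hL per_low[of "t + L" H m \<sigma>] Lh h by simp
  then have "detect s e (per H m \<sigma>) t \<le> of_nat (Suc L)" by (rule detect_le)
  then have "of_nat K * detect s e (per H m \<sigma>) t \<le> of_nat K * (of_nat (Suc L) :: ennreal)"
    by (rule mult_left_mono) simp
  also have "\<dots> = of_nat (K * Suc L)" by (simp only: of_nat_mult)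
  also have "\<dots> \<le> of_nat (Suc K * Suc L + (if H < t + m * K then K * m else 0))"
    by (simp only: of_nat_le_iff) simp
  also have "\<dots> = of_nat (Suc K) * detect s e \<sigma> t + of_nat (if H < t + m * K then K * m else 0)"
    unfolding dL by (simp only: of_nat_add of_nat_mult)
  finally show ?thesis .
next
  case False
  have ge: "of_nat (Suc (H - t)) \<le> detect s e \<sigma> t"
    by (rule detect_ge) (use False in auto)
  have eq: "t + (H + i - t) = H + i" using tH by simp
  have "e \<in> s (per H m \<sigma> (t + (H + i - t)))" unfolding eq using per_block[OF i(1)] i by simp
  then have le: "detect s e (per H m \<sigma>) t \<le> of_nat (Suc (H + i - t))" by (rule detect_le)
  show ?thesis
  proof (cases "detect s e \<sigma> t = \<infinity>")
    case True
    then show ?thesis by (simp add: ennreal_mult_top)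
  next
    case False
    then obtain n where n: "detect s e \<sigma> t = of_nat n" using detect_cases[of s e \<sigma> t] by blast
    have nge: "Suc (H - t) \<le> n" using ge unfolding n by (simp only: of_nat_le_iff)
    have key: "K * Suc (H + i - t) \<le> Suc K * n + (if H < t + m * K then K * m else 0)"
    proof -
      have a: "K * Suc (H + i - t) \<le> K * (H - t) + K * m"
      proof -
        have "Suc (H + i - t) \<le> (H - t) + m" using i tH by simp
        then have "K * Suc (H + i - t) \<le> K * ((H - t) + m)" by (rule mult_le_mono2)
        then show ?thesis by (simp add: algebra_simps)
      qed
      have b: "K * (H - t) \<le> K * n" using nge by (intro mult_le_mono2) simp
      have c: "Suc K * n = K * n + n" by simp
      show ?thesis
      proof (cases "H < t + m * K")
        case True
        have "K * Suc (H + i - t) \<le> Suc K * n + K * m" using a b c by linarith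
        then show ?thesis using True by simp
      next
        case False
        then have "K * m \<le> n" using nge by (simp add: mult.commute)
        then have "K * Suc (H + i - t) \<le> Suc K * n" using a b c by linarith
        then show ?thesis using False by simp
      qed
    qed
    have "of_nat K * detect s e (per H m \<sigma>) t \<le> of_nat K * (of_nat (Suc (H + i - t)) :: ennreal)"
      using le by (rule mult_left_mono) simp
    also have "\<dots> = of_nat (K * Suc (H + i - t))" by (simp only: of_nat_mult)
    also have "\<dots> \<le> of_nat (Suc K * n + (if H < t + m * K then K * m else 0))"
      using key by (simp only: of_nat_le_iff)
    also have "\<dots> = of_nat (Suc K) * detect s e \<sigma> t + of_nat (if H < t + m * K then K * m else 0)"
      unfolding n by (simp only: of_nat_add of_nat_mult)
    finally show ?thesis .
  qed
qed

lemma per_block_bound: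
  assumes i: "i < m" "e \<in> s i" and t: "H \<le> t" "t < H + m"
  shows "detect s e (per H m \<sigma>) t \<le> of_nat m + detect s e \<sigma> 0"
proof (cases "\<exists>h<H. e \<in> s (\<sigma> h)")
  case True
  then obtain h where h: "h < H" "e \<in> s (\<sigma> (0 + h))" by auto
  define L where "L = (LEAST h. e \<in> s (\<sigma> (0 + h)))"
  have dL: "detect s e \<sigma> 0 = of_nat (Suc L)" and hL: "e \<in> s (\<sigma> (0 + L))" and Lh: "L \<le> h"
    using detect_least[of e s \<sigma>, OF h(2)] unfolding L_def by auto
  have eq: "t + (H + m + L - t) = L + (H + m)" using t by simp
  have "per H m \<sigma> (L + (H + m)) = \<sigma> L" using per_P[of H m \<sigma> L] per_low[of L H m \<sigma>] Lh h by simp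
  then have "e \<in> s (per H m \<sigma> (t + (H + m + L - t)))" unfolding eq using hL by simp
  then have "detect s e (per H m \<sigma>) t \<le> of_nat (Suc (H + m + L - t))" by (rule detect_le)
  also have "\<dots> \<le> of_nat (m + Suc L)" using t by (simp only: of_nat_le_iff)
  also have "\<dots> = of_nat m + detect s e \<sigma> 0" unfolding dL by (simp only: of_nat_add)
  finally show ?thesis .
next
  case False
  have ge: "of_nat (Suc H) \<le> detect s e \<sigma> 0"
    by (rule detect_ge) (use False in auto)
  have "detect s e (per H m \<sigma>) t \<le> of_nat (H + m)" by (rule detect_per_le_P[of i m e s, OF i])
  also have "\<dots> \<le> of_nat (m + Suc H)" by (simp only: of_nat_le_iff)
  also have "\<dots> = of_nat m + (of_nat (Suc H) :: ennreal)" by (simp only: of_nat_add)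
  also have "\<dots> \<le> of_nat m + detect s e \<sigma> 0" using ge by (rule add_left_mono)
  finally show ?thesis .
qed

lemma sum_split_H: "(\<Sum>t<(H::nat) + m. f t) = (\<Sum>t<H. f t) + (\<Sum>t\<in>{H..<H + m}. (f t :: 'a :: comm_monoid_add))"
proof -
  have "{..<H + m} = {..<H} \<union> {H..<H + m}" by auto
  then show ?thesis by (simp add: sum.union_disjoint ivl_disj_int)
qed

lemma count_tail: "(\<Sum>t<H. if H < t + c then a else 0) \<le> a * (c :: nat)"
proof -
  have "(\<Sum>t<H. if H < t + c then a else 0) = (\<Sum>t\<in>{H - c..<H}. if H < t + c then a else 0)"
    by (rule sum.mono_neutral_right) auto
  also have "\<dots> \<le> (\<Sum>t\<in>{H - c..<H}. a)" by (rule sum_mono) simp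
  also have "\<dots> \<le> a * c" by (simp add: mult.commute diff_diff_cancel) (metis diff_le_self diff_diff_cancel le_cases mult_le_mono2 diff_is_0_eq)
  finally show ?thesis .
qed

lemma per_sum_bound:
  assumes i: "i < m" "e \<in> s i"
  shows "of_nat K * (\<Sum>t<H + m. detect s e (per H m \<sigma>) t)
    \<le> of_nat (Suc K) * (\<Sum>t<H. detect s e \<sigma> t) + of_nat (K * m * (m * K) + K * m * m)
       + of_nat (K * m) * detect s e \<sigma> 0"
proof -
  let ?c = "\<lambda>t. if H < t + m * K then K * m else 0"
  have 1: "of_nat K * (\<Sum>t<H. detect s e (per H m \<sigma>) t)
      \<le> of_nat (Suc K) * (\<Sum>t<H. detect s e \<sigma> t) + of_nat (K * m * (m * K))"
  proof -
    have "of_nat K * (\<Sum>t<H. detect s e (per H m \<sigma>) t) = (\<Sum>t<H. of_nat K * detect s e (per H m \<sigma>) t)"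
      by (simp add: sum_distrib_left)
    also have "\<dots> \<le> (\<Sum>t<H. of_nat (Suc K) * detect s e \<sigma> t + of_nat (?c t))"
      by (rule sum_mono) (rule per_low_bound[of i m e s, OF i], simp)
    also have "\<dots> = of_nat (Suc K) * (\<Sum>t<H. detect s e \<sigma> t) + of_nat (\<Sum>t<H. ?c t)"
      by (simp add: sum.distrib sum_distrib_left del: of_nat_Suc)
    also have "of_nat (\<Sum>t<H. ?c t) \<le> (of_nat (K * m * (m * K)) :: ennreal)"
      using count_tail[of H "m * K" "K * m"] by (simp only: of_nat_le_iff)
    finally show ?thesis by (simp add: add_left_mono)
  qed
  have 2: "of_nat K * (\<Sum>t\<in>{H..<H + m}. detect s e (per H m \<sigma>) t)
      \<le> of_nat (K * m * m) + of_nat (K * m) * detect s e \<sigma> 0"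
  proof -
    have "(\<Sum>t\<in>{H..<H + m}. detect s e (per H m \<sigma>) t) \<le> (\<Sum>t\<in>{H..<H + m}. of_nat m + detect s e \<sigma> 0)"
      by (rule sum_mono) (rule per_block_bound[of i m e s, OF i], auto)
    also have "\<dots> = of_nat m * (of_nat m + detect s e \<sigma> 0)" by simp
    finally have "of_nat K * (\<Sum>t\<in>{H..<H + m}. detect s e (per H m \<sigma>) t)
        \<le> of_nat K * (of_nat m * (of_nat m + detect s e \<sigma> 0))" by (rule mult_left_mono) simp
    also have "\<dots> = of_nat (K * m * m) + of_nat (K * m) * detect s e \<sigma> 0"
      by (simp add: algebra_simps)
    finally show ?thesis .
  qed
  have "of_nat K * (\<Sum>t<H + m. detect s e (per H m \<sigma>) t)
     = of_nat K * (\<Sum>t<H. detect s e (per H m \<sigma>) t) + of_nat K * (\<Sum>t\<in>{H..<H + m}. detect s e (per H m \<sigma>) t)"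
    by (simp add: sum_split_H distrib_left)
  also have "\<dots> \<le> (of_nat (Suc K) * (\<Sum>t<H. detect s e \<sigma> t) + of_nat (K * m * (m * K)))
      + (of_nat (K * m * m) + of_nat (K * m) * detect s e \<sigma> 0)"
    by (rule add_mono[OF 1 2])
  also have "\<dots> = of_nat (Suc K) * (\<Sum>t<H. detect s e \<sigma> t) + of_nat (K * m * (m * K) + K * m * m)
       + of_nat (K * m) * detect s e \<sigma> 0"
    by (simp only: of_nat_add add.assoc)
  finally show ?thesis .
qed

lemma sto_basic:
  assumes v: "valid_sto E m s M"
  shows "prob_space M" "sets M = sets (sched_space m)" "space M = space (sched_space m)"
    "0 < m" "\<And>e. e \<in> E \<Longrightarrow> Mt (sto_D s M) e < \<infinity>"
    "\<And>e. e \<in> E \<Longrightarrow> \<exists>i<m. e \<in> s i"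
    "\<And>f. f \<in> borel_measurable (sched_space m) \<Longrightarrow> f \<in> borel_measurable M"
proof -
  show P: "prob_space M" and S: "sets M = sets (sched_space m)" using v unfolding valid_sto_def by auto
  show Sp: "space M = space (sched_space m)" using S by (rule sets_eq_imp_space_eq)
  obtain \<sigma> where \<sigma>: "\<sigma> \<in> space M" using prob_space.not_empty[OF P] by blast
  then show "0 < m" using Sp unfolding space_sched by (metis gr_zeroI less_zeroE mem_Collect_eq)
  show Mt: "\<And>e. e \<in> E \<Longrightarrow> Mt (sto_D s M) e < \<infinity>" using v unfolding valid_sto_def valid_gen_def by auto
  show "\<And>f. f \<in> borel_measurable (sched_space m) \<Longrightarrow> f \<in> borel_measurable M"
    using measurable_cong_sets[OF S refl] by blast
  fix e assume e: "e \<in> E"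
  show "\<exists>i<m. e \<in> s i"
  proof (rule ccontr)
    assume no: "\<not> (\<exists>i<m. e \<in> s i)"
    have "sto_D s M e 0 = (\<integral>\<^sup>+ \<sigma>. \<infinity> \<partial>M)" unfolding sto_D_def
    proof (rule nn_integral_cong)
      fix \<sigma> assume "\<sigma> \<in> space M"
      then have "\<forall>t. \<sigma> t < m" using Sp unfolding space_sched by auto
      then show "detect s e \<sigma> 0 = \<infinity>" using no unfolding detect_def by auto
    qed
    also have "\<dots> = \<infinity>" using prob_space.emeasure_space_1[OF P] by simp
    finally have "sto_D s M e 0 = \<infinity>" .
    moreover have "sto_D s M e 0 < \<infinity>" using Mt_fin_detect(2)[OF Mt[OF e]] .
    ultimately show False by simp
  qed
qed

lemma integral_R:
  assumes v: "valid_sto E m s M"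
  shows "(\<integral>\<^sup>+ \<sigma>. (\<Sum>e\<in>E. ennreal (p e) * (of_nat a * (\<Sum>t<H. detect s e \<sigma> t) + of_nat c
            + of_nat b * detect s e \<sigma> 0)) \<partial>M)
     = (\<Sum>e\<in>E. ennreal (p e) * (of_nat a * (\<Sum>t<H. sto_D s M e t) + of_nat c + of_nat b * sto_D s M e 0))"
proof -
  have dm[measurable]: "(\<lambda>\<sigma>. detect s e \<sigma> t) \<in> borel_measurable M" for e t
    by (rule sto_basic(7)[OF v detect_measurable])
  have P: "prob_space M" by (rule sto_basic(1)[OF v])
  have "(\<integral>\<^sup>+ \<sigma>. (\<Sum>e\<in>E. ennreal (p e) * (of_nat a * (\<Sum>t<H. detect s e \<sigma> t) + of_nat c
            + of_nat b * detect s e \<sigma> 0)) \<partial>M)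
      = (\<Sum>e\<in>E. \<integral>\<^sup>+ \<sigma>. ennreal (p e) * (of_nat a * (\<Sum>t<H. detect s e \<sigma> t) + of_nat c
            + of_nat b * detect s e \<sigma> 0) \<partial>M)"
    by (rule nn_integral_sum) measurable
  also have "\<dots> = (\<Sum>e\<in>E. ennreal (p e) * (of_nat a * (\<Sum>t<H. sto_D s M e t) + of_nat c + of_nat b * sto_D s M e 0))"
  proof (rule sum.cong[OF refl])
    fix e
    have "(\<integral>\<^sup>+ \<sigma>. ennreal (p e) * (of_nat a * (\<Sum>t<H. detect s e \<sigma> t) + of_nat c
            + of_nat b * detect s e \<sigma> 0) \<partial>M)
       = ennreal (p e) * (\<integral>\<^sup>+ \<sigma>. (of_nat a * (\<Sum>t<H. detect s e \<sigma> t) + of_nat c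
            + of_nat b * detect s e \<sigma> 0) \<partial>M)"
      by (rule nn_integral_cmult) measurable
    also have "(\<integral>\<^sup>+ \<sigma>. (of_nat a * (\<Sum>t<H. detect s e \<sigma> t) + of_nat c
            + of_nat b * detect s e \<sigma> 0) \<partial>M)
       = (\<integral>\<^sup>+ \<sigma>. (of_nat a * (\<Sum>t<H. detect s e \<sigma> t) + of_nat c) \<partial>M)
            + (\<integral>\<^sup>+ \<sigma>. of_nat b * detect s e \<sigma> 0 \<partial>M)"
      by (rule nn_integral_add) measurable
    also have "(\<integral>\<^sup>+ \<sigma>. (of_nat a * (\<Sum>t<H. detect s e \<sigma> t) + of_nat c) \<partial>M)
       = (\<integral>\<^sup>+ \<sigma>. of_nat a * (\<Sum>t<H. detect s e \<sigma> t) \<partial>M) + (\<integral>\<^sup>+ \<sigma>. of_nat c \<partial>M)"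
      by (rule nn_integral_add) measurable
    also have "(\<integral>\<^sup>+ \<sigma>. of_nat a * (\<Sum>t<H. detect s e \<sigma> t) \<partial>M)
       = of_nat a * (\<integral>\<^sup>+ \<sigma>. (\<Sum>t<H. detect s e \<sigma> t) \<partial>M)"
      by (rule nn_integral_cmult) measurable
    also have "(\<integral>\<^sup>+ \<sigma>. (\<Sum>t<H. detect s e \<sigma> t) \<partial>M) = (\<Sum>t<H. sto_D s M e t)"
      unfolding sto_D_def by (rule nn_integral_sum) measurable
    also have "(\<integral>\<^sup>+ \<sigma>. of_nat c \<partial>M) = of_nat c"
      using prob_space.emeasure_space_1[OF P] by simp
    also have "(\<integral>\<^sup>+ \<sigma>. of_nat b * detect s e \<sigma> 0 \<partial>M) = of_nat b * sto_D s M e 0"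
      unfolding sto_D_def by (rule nn_integral_cmult) measurable
    finally show "(\<integral>\<^sup>+ \<sigma>. ennreal (p e) * (of_nat a * (\<Sum>t<H. detect s e \<sigma> t) + of_nat c
            + of_nat b * detect s e \<sigma> 0) \<partial>M)
       = ennreal (p e) * (of_nat a * (\<Sum>t<H. sto_D s M e t) + of_nat c + of_nat b * sto_D s M e 0)" .
  qed
  finally show ?thesis .
qed

lemma exists_below:
  assumes P: "prob_space M"
  shows "\<exists>\<sigma>\<in>space M. f \<sigma> \<le> (\<integral>\<^sup>+ x. f x \<partial>M) + 1"
proof (rule ccontr)
  assume "\<not> ?thesis"
  then have lt: "\<And>\<sigma>. \<sigma> \<in> space M \<Longrightarrow> (\<integral>\<^sup>+ x. f x \<partial>M) + 1 < f \<sigma>" by (auto simp: not_le)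
  let ?I = "\<integral>\<^sup>+ x. f x \<partial>M"
  have "(\<integral>\<^sup>+ x. (?I + 1) \<partial>M) \<le> ?I"
    by (rule nn_integral_mono) (use lt in \<open>auto intro: less_imp_le\<close>)
  then have le: "?I + 1 \<le> ?I" using prob_space.emeasure_space_1[OF P] by simp
  obtain \<sigma> where \<sigma>: "\<sigma> \<in> space M" using prob_space.not_empty[OF P] by blast
  show False
  proof (cases "?I = \<infinity>")
    case True then show False using lt[OF \<sigma>] by simp
  next
    case False
    then have "?I < ?I + 1" by (simp add: ennreal_add_left_cancel_less less_top)
    then show False using le by simp
  qed
qed

lemma per_valid:
  assumes \<sigma>: "\<And>t. \<sigma> t < m" and m0: "0 < m" and cov: "\<And>e. e \<in> E \<Longrightarrow> \<exists>i<m. e \<in> s i"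
  shows "valid_det E m s (per H m \<sigma>)"
    "\<And>e t. e \<in> E \<Longrightarrow> detect s e (per H m \<sigma>) t < \<infinity>"
    "\<And>e. e \<in> E \<Longrightarrow> Et (det_D s (per H m \<sigma>)) e
        = (\<Sum>t<H + m. enn2real (detect s e (per H m \<sigma>) t)) / real (H + m)"
proof -
  let ?\<tau> = "per H m \<sigma>"
  have P0: "0 < H + m" using m0 by simp
  have leP: "detect s e ?\<tau> t \<le> of_nat (H + m)" if eE: "e \<in> E" for e t
  proof -
    obtain i where "i < m" "e \<in> s i" using cov[OF eE] by blast
    then show ?thesis by (rule detect_per_le_P)
  qed
  show fin: "\<And>e t. e \<in> E \<Longrightarrow> detect s e ?\<tau> t < \<infinity>"
    using le_less_trans[OF leP of_nat_less_top] by simp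
  have conv_e: "(\<lambda>H'. (\<Sum>t<H'. enn2real (detect s e ?\<tau> t)) / real H') \<longlonglongrightarrow>
       (\<Sum>t<H + m. enn2real (detect s e ?\<tau> t)) / real (H + m)" for e
  proof (rule periodic_avg[OF P0])
    fix t show "enn2real (detect s e ?\<tau> (t + (H + m))) = enn2real (detect s e ?\<tau> t)"
      by (simp only: detect_per_periodic)
  qed
  show "\<And>e. e \<in> E \<Longrightarrow> Et (det_D s ?\<tau>) e
        = (\<Sum>t<H + m. enn2real (detect s e ?\<tau> t)) / real (H + m)"
    unfolding Et_def det_D_def using conv_e by (simp add: limI)
  have convF: "convergent (\<lambda>H'. (\<Sum>t<H'. det_F ?\<tau> i t) / real H')" for i
  proof -
    have "det_F ?\<tau> i (t + (H + m)) = det_F ?\<tau> i t" for t unfolding det_F_def by (simp only: per_P)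
    from periodic_avg[OF P0, of "\<lambda>t. det_F ?\<tau> i t", OF this] show ?thesis
      unfolding convergent_def by blast
  qed
  have Mt: "Mt (det_D s ?\<tau>) e < \<infinity>" if "e \<in> E" for e
  proof -
    have "Mt (det_D s ?\<tau>) e \<le> of_nat (H + m)" unfolding Mt_def det_D_def
      by (rule SUP_least) (use leP[OF that] in auto)
    from le_less_trans[OF this of_nat_less_top] show ?thesis by simp
  qed
  show "valid_det E m s ?\<tau>"
    unfolding valid_det_def valid_gen_def
  proof (intro conjI ballI allI impI)
    fix t show "?\<tau> t < m" using per_range[of \<sigma> m H t] \<sigma> m0 by blast
  next
    fix e assume "e \<in> E" then show "Mt (det_D s ?\<tau>) e < \<infinity>" by (rule Mt)
  next
    fix e show "convergent (\<lambda>H. (\<Sum>t<H. enn2real (det_D s ?\<tau> e t)) / real H)"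
      using conv_e[of e] unfolding convergent_def det_D_def by blast
  next
    fix i show "convergent (\<lambda>H. (\<Sum>t<H. det_F ?\<tau> i t) / real H)" by (rule convF)
  qed
qed

lemma ennreal_expr:
  assumes "0 \<le> p" "\<And>t. 0 \<le> f t" "0 \<le> z"
  shows "ennreal p * (of_nat a * (\<Sum>t<H. ennreal (f t)) + of_nat c + of_nat b * ennreal z)
     = ennreal (p * (real a * (\<Sum>t<H. f t) + real c + real b * z))"
  using assms by (simp add: sum_ennreal ennreal_of_nat_eq_real_of_nat ennreal_mult'' ennreal_plus sum_nonneg)

lemma ennreal_expr2:
  assumes "0 \<le> p" "\<And>t. 0 \<le> f t"
  shows "ennreal p * (of_nat a * (\<Sum>t<H. ennreal (f t)))
     = ennreal (p * (real a * (\<Sum>t<H. f t)))"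
  using assms by (simp add: sum_ennreal ennreal_of_nat_eq_real_of_nat ennreal_mult'' sum_nonneg)

lemma hard:
  assumes fE: "finite E" and p: "\<forall>e\<in>E. p e \<ge> 0" and v: "valid_sto E m s M"
  shows "optD EEP E m s p \<le> ereal (EEP E p (sto_D s M))"
proof -
  define D where "D = sto_D s M"
  define d where "d e t = enn2real (D e t)" for e t
  have P: "prob_space M" and Sp: "space M = space (sched_space m)" and m0: "0 < m"
    using sto_basic[OF v] by auto
  have cov: "\<And>e. e \<in> E \<Longrightarrow> \<exists>i<m. e \<in> s i" using sto_basic(6)[OF v] by blast
  have Dfin: "D e t < \<infinity>" if "e \<in> E" for e t
    using Mt_fin_detect(2)[OF sto_basic(5)[OF v that]] unfolding D_def .
  have Dd: "D e t = ennreal (d e t)" if "e \<in> E" for e t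
    using Dfin[OF that, of t] unfolding d_def by (simp add: ennreal_enn2real)
  have d0: "0 \<le> d e t" for e t unfolding d_def by simp
  have conv: "(\<lambda>H. (\<Sum>t<H. d e t) / real H) \<longlonglongrightarrow> Et D e" if "e \<in> E" for e
    using v that unfolding valid_sto_def valid_gen_def Et_def d_def D_def
    by (simp add: convergent_LIMSEQ_iff)
  have Et0: "0 \<le> Et D e" if "e \<in> E" for e
    by (rule LIMSEQ_le_const[OF conv[OF that]]) (auto intro!: divide_nonneg_nonneg sum_nonneg d0)
  define X where "X = EEP E p D"
  have X0: "0 \<le> X" unfolding X_def EEP_def using p Et0 by (auto intro!: sum_nonneg)
  have A: "(\<lambda>H. \<Sum>e\<in>E. p e * ((\<Sum>t<H. d e t) / real H)) \<longlonglongrightarrow> X"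
    unfolding X_def EEP_def by (intro tendsto_sum tendsto_mult_left conv)
  show ?thesis unfolding D_def[symmetric] X_def[symmetric]
  proof (rule ereal_le_epsilon2)
    fix \<epsilon> :: real assume \<epsilon>: "0 < \<epsilon>"
    define K :: nat where "K = nat \<lceil>2 * X / \<epsilon>\<rceil> + 1"
    have K1: "1 \<le> K" unfolding K_def by simp
    have "2 * X / \<epsilon> \<le> real K" unfolding K_def using real_nat_ceiling_ge[of "2 * X / \<epsilon>"] by simp
    then have KX: "X / real K \<le> \<epsilon> / 2" using K1 \<epsilon> by (simp add: field_simps)
    define C where "C = K * m * (m * K) + K * m * m"
    define Q where "Q H = (\<Sum>e\<in>E. p e * (real (Suc K) * (\<Sum>t<H. d e t) + real C + real (K * m) * d e 0))" for H
    define c0 where "c0 = ((\<Sum>e\<in>E. p e * (real C + real (K * m) * d e 0)) + 1) / real K"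
    define A' where "A' H = (\<Sum>e\<in>E. p e * ((\<Sum>t<H. d e t) / real H))" for H
    have Beq: "(Q H + 1) / (real K * real H) = (real (Suc K) / real K) * A' H + c0 * (1 / real H)" if H: "0 < H" for H
    proof -
      have q: "Q H = real (Suc K) * (\<Sum>e\<in>E. p e * (\<Sum>t<H. d e t)) + (\<Sum>e\<in>E. p e * (real C + real (K * m) * d e 0))"
        unfolding Q_def by (simp add: sum.distrib sum_distrib_left algebra_simps)
      have "A' H = (\<Sum>e\<in>E. p e * (\<Sum>t<H. d e t) / real H)"
        unfolding A'_def by simp
      also have "\<dots> = (\<Sum>e\<in>E. p e * (\<Sum>t<H. d e t)) / real H"
        by (rule sum_divide_distrib[symmetric])
      finally have a: "A' H = (\<Sum>e\<in>E. p e * (\<Sum>t<H. d e t)) / real H" .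
      show ?thesis unfolding q a c0_def using H K1 by (simp add: field_simps)
    qed
    have Blim: "(\<lambda>H. (real (Suc K) / real K) * A' H + c0 * (1 / real H)) \<longlonglongrightarrow> (real (Suc K) / real K) * X + c0 * 0"
      unfolding A'_def by (intro tendsto_intros A lim_inverse_n')
    have lt: "(real (Suc K) / real K) * X + c0 * 0 < X + \<epsilon>"
    proof -
      have "(real (Suc K) / real K) * X = X + X / real K" using K1 by (simp add: field_simps)
      then show ?thesis using KX \<epsilon> by simp
    qed
    have "\<forall>\<^sub>F H in sequentially. (real (Suc K) / real K) * A' H + c0 * (1 / real H) < X + \<epsilon> \<and> 1 \<le> H"
      using order_tendstoD(2)[OF Blim lt] eventually_ge_at_top[of 1] by (rule eventually_conj)
    then obtain N where "\<forall>n\<ge>N. (real (Suc K) / real K) * A' n + c0 * (1 / real n) < X + \<epsilon> \<and> 1 \<le> n"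
      unfolding eventually_sequentially by blast
    then obtain H where H1: "1 \<le> H" and HB: "(real (Suc K) / real K) * A' H + c0 * (1 / real H) < X + \<epsilon>"
      by blast
    have B: "(Q H + 1) / (real K * real H) < X + \<epsilon>" using Beq[of H] H1 HB by simp
    define R where "R \<sigma> = (\<Sum>e\<in>E. ennreal (p e) * (of_nat (Suc K) * (\<Sum>t<H. detect s e \<sigma> t) + of_nat C
        + of_nat (K * m) * detect s e \<sigma> 0))" for \<sigma>
    obtain \<sigma> where \<sigma>: "\<sigma> \<in> space M" and R\<sigma>: "R \<sigma> \<le> (\<integral>\<^sup>+ x. R x \<partial>M) + 1"
      using exists_below[OF P, of R] by blast
    have IR: "(\<integral>\<^sup>+ x. R x \<partial>M) = (\<Sum>e\<in>E. ennreal (p e) * (of_nat (Suc K) * (\<Sum>t<H. D e t) + of_nat C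
        + of_nat (K * m) * D e 0))"
      unfolding R_def D_def by (rule integral_R[OF v])
    also have "\<dots> = (\<Sum>e\<in>E. ennreal (p e * (real (Suc K) * (\<Sum>t<H. d e t) + real C + real (K * m) * d e 0)))"
    proof (rule sum.cong[OF refl])
      fix e assume e: "e \<in> E"
      show "ennreal (p e) * (of_nat (Suc K) * (\<Sum>t<H. D e t) + of_nat C + of_nat (K * m) * D e 0)
        = ennreal (p e * (real (Suc K) * (\<Sum>t<H. d e t) + real C + real (K * m) * d e 0))"
        unfolding Dd[OF e] using p e d0 by (intro ennreal_expr) auto
    qed
    also have "\<dots> = ennreal (Q H)" unfolding Q_def
      using p d0 by (intro sum_ennreal) (auto intro!: mult_nonneg_nonneg add_nonneg_nonneg sum_nonneg)
    finally have IR': "(\<integral>\<^sup>+ x. R x \<partial>M) = ennreal (Q H)" .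
    have Q0: "0 \<le> Q H" unfolding Q_def
      using p d0 by (auto intro!: mult_nonneg_nonneg add_nonneg_nonneg sum_nonneg)
    have \<sigma>t: "\<And>t. \<sigma> t < m" using \<sigma> Sp unfolding space_sched by auto
    let ?\<tau> = "per H m \<sigma>"
    have vt: "valid_det E m s ?\<tau>" by (rule per_valid(1)[OF \<sigma>t m0 cov])
    have fint: "\<And>e t. e \<in> E \<Longrightarrow> detect s e ?\<tau> t < \<infinity>" by (rule per_valid(2)[OF \<sigma>t m0 cov])
    have Ett: "\<And>e. e \<in> E \<Longrightarrow> Et (det_D s ?\<tau>) e
        = (\<Sum>t<H + m. enn2real (detect s e ?\<tau> t)) / real (H + m)" by (rule per_valid(3)[OF \<sigma>t m0 cov])
    define dt where "dt e t = enn2real (detect s e ?\<tau> t)" for e t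
    have dtd: "detect s e ?\<tau> t = ennreal (dt e t)" if "e \<in> E" for e t
      using fint[OF that, of t] unfolding dt_def by (simp add: ennreal_enn2real)
    have "(\<Sum>e\<in>E. ennreal (p e) * (of_nat K * (\<Sum>t<H + m. detect s e ?\<tau> t))) \<le> R \<sigma>"
      unfolding R_def
    proof (rule sum_mono)
      fix e assume e: "e \<in> E"
      obtain i where i: "i < m" "e \<in> s i" using cov[OF e] by blast
      show "ennreal (p e) * (of_nat K * (\<Sum>t<H + m. detect s e ?\<tau> t))
        \<le> ennreal (p e) * (of_nat (Suc K) * (\<Sum>t<H. detect s e \<sigma> t) + of_nat C + of_nat (K * m) * detect s e \<sigma> 0)"
        unfolding C_def by (rule mult_left_mono[OF per_sum_bound[of i m e s, OF i]]) simp
    qed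
    also have "\<dots> \<le> ennreal (Q H) + 1" using R\<sigma> IR' by simp
    also have "\<dots> = ennreal (Q H + 1)" using Q0 by (simp add: ennreal_plus)
    finally have LE: "(\<Sum>e\<in>E. ennreal (p e) * (of_nat K * (\<Sum>t<H + m. detect s e ?\<tau> t))) \<le> ennreal (Q H + 1)" .
    have "(\<Sum>e\<in>E. ennreal (p e) * (of_nat K * (\<Sum>t<H + m. detect s e ?\<tau> t)))
        = (\<Sum>e\<in>E. ennreal (p e * (real K * (\<Sum>t<H + m. dt e t))))"
    proof (rule sum.cong[OF refl])
      fix e assume e: "e \<in> E"
      show "ennreal (p e) * (of_nat K * (\<Sum>t<H + m. detect s e ?\<tau> t)) = ennreal (p e * (real K * (\<Sum>t<H + m. dt e t)))"
        unfolding dtd[OF e] using p e by (intro ennreal_expr2) (auto simp: dt_def)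
    qed
    also have "\<dots> = ennreal (\<Sum>e\<in>E. p e * (real K * (\<Sum>t<H + m. dt e t)))"
      using p by (intro sum_ennreal) (auto intro!: mult_nonneg_nonneg sum_nonneg simp: dt_def)
    finally have eq: "(\<Sum>e\<in>E. ennreal (p e) * (of_nat K * (\<Sum>t<H + m. detect s e ?\<tau> t)))
       = ennreal (\<Sum>e\<in>E. p e * (real K * (\<Sum>t<H + m. dt e t)))" .
    have "ennreal (\<Sum>e\<in>E. p e * (real K * (\<Sum>t<H + m. dt e t))) \<le> ennreal (Q H + 1)"
      using LE unfolding eq .
    then have real_le: "(\<Sum>e\<in>E. p e * (real K * (\<Sum>t<H + m. dt e t))) \<le> Q H + 1"
      using ennreal_le_iff[of "Q H + 1"] Q0 by (metis add_nonneg_nonneg zero_le_one)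
    have EEPt: "EEP E p (det_D s ?\<tau>) = (\<Sum>e\<in>E. p e * (real K * (\<Sum>t<H + m. dt e t))) / (real K * real (H + m))"
    proof -
      have "EEP E p (det_D s ?\<tau>) = (\<Sum>e\<in>E. p e * (real K * (\<Sum>t<H + m. dt e t)) / (real K * real (H + m)))"
        unfolding EEP_def
      proof (rule sum.cong[OF refl])
        fix e assume e: "e \<in> E"
        show "p e * Et (det_D s ?\<tau>) e = p e * (real K * (\<Sum>t<H + m. dt e t)) / (real K * real (H + m))"
          unfolding Ett[OF e] dt_def using K1 by simp
      qed
      also have "\<dots> = (\<Sum>e\<in>E. p e * (real K * (\<Sum>t<H + m. dt e t))) / (real K * real (H + m))"
        by (rule sum_divide_distrib[symmetric])
      finally show ?thesis .
    qed
    also have "\<dots> \<le> (Q H + 1) / (real K * real (H + m))"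
      using real_le K1 m0 by (intro divide_right_mono) auto
    also have "\<dots> \<le> (Q H + 1) / (real K * real H)"
      using Q0 K1 H1 by (intro divide_left_mono mult_left_mono mult_pos_pos) auto
    also have "\<dots> < X + \<epsilon>" by (rule B)
    finally have "EEP E p (det_D s ?\<tau>) < X + \<epsilon>" .
    moreover have "optD EEP E m s p \<le> ereal (EEP E p (det_D s ?\<tau>))"
      unfolding optD_def using vt by (intro INF_lower) simp
    ultimately show "optD EEP E m s p \<le> ereal X + ereal \<epsilon>"
      by (metis ereal_less_eq(3) less_imp_le order_trans plus_ereal.simps(1))
  qed
qed

lemma ereal_helper: "x \<le> ereal a \<Longrightarrow> 2 * a \<le> b + 1 \<Longrightarrow> 2 * x - 1 \<le> ereal b"
  by (cases x) (auto simp: one_ereal_def)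

lemma optSUM_le_det: "valid_det E m s \<sigma> \<Longrightarrow> opt_SUM E m s p \<le> ereal (EEP E p (det_D s \<sigma>))"
  unfolding opt_SUM_def using valid_dirac[of E m s \<sigma>]
  by (intro INF_lower2[of "return (sched_space m) \<sigma>"]) auto

lemma optMAX_le_det: "valid_det E m s \<sigma> \<Longrightarrow> opt_MAX E m s p \<le> ereal (WEP E p (det_D s \<sigma>))"
  unfolding opt_MAX_def using valid_dirac[of E m s \<sigma>]
  by (intro INF_lower2[of "return (sched_space m) \<sigma>"]) auto

theorem lemma4:
  fixes E :: "'e set" and m :: nat and s :: "nat \<Rightarrow> 'e set" and p :: "'e \<Rightarrow> real"
  assumes "finite E"
    and "\<forall>i<m. s i \<subseteq> E"
    and "\<forall>e\<in>E. p e \<ge> 0"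
  shows "((\<Sum>e\<in>E. p e) = 1 \<longrightarrow>
            optD EEP E m s p = opt_SUM E m s p \<and>
            optD EMP E m s p \<ge> 2 * opt_SUM E m s p - 1) \<and>
         (E \<noteq> {} \<and> Max (p ` E) = 1 \<longrightarrow>
            optD WMP E m s p \<ge> 2 * opt_MAX E m s p - 1)"
proof (intro conjI impI)
  assume s1: "(\<Sum>e\<in>E. p e) = 1"
  show "optD EEP E m s p = opt_SUM E m s p"
  proof (rule antisym)
    show "optD EEP E m s p \<le> opt_SUM E m s p"
      unfolding opt_SUM_def by (rule INF_greatest) (use hard[OF assms(1) assms(3)] in auto)
    show "opt_SUM E m s p \<le> optD EEP E m s p"
      unfolding optD_def by (rule INF_greatest) (auto intro: optSUM_le_det)
  qed
  show "2 * opt_SUM E m s p - 1 \<le> optD EMP E m s p"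
    unfolding optD_def
  proof (rule INF_greatest)
    fix \<sigma> assume "\<sigma> \<in> {\<sigma>. valid_det E m s \<sigma>}"
    then have v: "valid_det E m s \<sigma>" by simp
    show "2 * opt_SUM E m s p - 1 \<le> ereal (EMP E p (det_D s \<sigma>))"
      by (rule ereal_helper[OF optSUM_le_det[OF v] det_EEP_EMP[OF v assms(3) s1]])
  qed
next
  assume a: "E \<noteq> {} \<and> Max (p ` E) = 1"
  show "2 * opt_MAX E m s p - 1 \<le> optD WMP E m s p"
    unfolding optD_def
  proof (rule INF_greatest)
    fix \<sigma> assume "\<sigma> \<in> {\<sigma>. valid_det E m s \<sigma>}"
    then have v: "valid_det E m s \<sigma>" by simp
    show "2 * opt_MAX E m s p - 1 \<le> ereal (WMP E p (det_D s \<sigma>))"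
      by (rule ereal_helper[OF optMAX_le_det[OF v] det_WEP_WMP[OF assms(1) _ v assms(3)]]) (use a in auto)
  qed
qed

end
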